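(* Let $F(x)=\sum_{n\ge 1} f(n)x^n$ be a formal power series with $f(1)=1$ and composita $F^{\Delta}(n,k)$, and let $A(x)=\sum_{n\ge 1}a(n)x^n$ be its reverse series, i.e. $F(A(x))=x$. Then $a(1)=1$ and for $n>1$ $$a(n)=\frac{1}{n}\sum_{k=1}^{n-1}\binom{n+k-1}{n-1}\sum_{j=1}^{k}(-1)^j\binom{k}{j}F^{\Delta}(n+j-1,j).$$
   Context: All generating functions are formal power series in $x$. For a power series $F(x)=\sum_{n\ge 1} f(n)x^n$ with zero constant term, its composita is the two-variable function $F^{\Delta}(n,k)$ ($n\ge k\ge 1$) defined by $F^{\Delta}(n,k)=\sum_{\lambda_1+\cdots+\lambda_k=n}f(\lambda_1)f(\lambda_2)\cdots f(\lambda_k)$, where the sum runs over all compositions of $n$ into exactly $k$ positive integer parts; equivalently $[F(x)]^k=\sum_{n\ge k}F^{\Delta}(n,k)x^n$. *)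

theory Defs
  imports "HOL-Computational_Algebra.Formal_Power_Series"
begin

definition compositions :: "nat \<Rightarrow> nat \<Rightarrow> nat list set" where
  "compositions n k = {xs. length xs = k \<and> (\<forall>x\<in>set xs. 0 < x) \<and> sum_list xs = n}"

definition composita :: "'a::comm_semiring_1 fps \<Rightarrow> nat \<Rightarrow> nat \<Rightarrow> 'a" where
  "composita F n k = (\<Sum>xs\<in>compositions n k. \<Prod>i<length xs. fps_nth F (xs ! i))"

end

theory Submission
  imports Defs "HOL-Computational_Algebra.Formal_Laurent_Series"
begin

lemma res_inv_pow:
  fixes a :: "'a::field_char_0 fls"
  assumes "fls_subdegree a = 1" "k \<ge> 1"
  shows "fls_residue (inverse a ^ k * fls_deriv a) = (if k = 1 then 1 else 0)"
proof (cases "k = 1")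
  case True
  then show ?thesis using fls_residue_deriv_times_inverse_eq_subdegree(2)[of a] assms by simp
next
  case False
  define j where "j = k - 2"
  have k: "k = Suc (Suc j)" using False assms(2) unfolding j_def by simp
  have "fls_deriv (inverse a ^ Suc j) = of_nat (Suc j) * inverse a ^ j * (- fls_deriv a * (inverse a)\<^sup>2)"
    by (simp only: fls_deriv_power diff_Suc_1 fls_inverse_deriv)
  also have "\<dots> = - of_nat (Suc j) * (inverse a ^ k * fls_deriv a)"
    by (simp add: k power2_eq_square algebra_simps)
  also have "\<dots> = fls_const (- of_nat (Suc j)) * (inverse a ^ k * fls_deriv a)"
    by (simp only: fls_of_nat fls_const_uminus[symmetric] mult_minus_left)
  finally have "fls_residue (fls_const (- of_nat (Suc j)) * (inverse a ^ k * fls_deriv a)) = 0"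
    by (metis fls_residue_deriv)
  then have "(- of_nat (Suc j) :: 'a) * fls_residue (inverse a ^ k * fls_deriv a) = 0"
    by (simp only: fls_residue_fls_const_times)
  then have "(of_nat (Suc j) :: 'a) * fls_residue (inverse a ^ k * fls_deriv a) = 0"
    by (simp only: mult_minus_left neg_equal_0_iff_equal)
  then have "fls_residue (inverse a ^ k * fls_deriv a) = 0"
    by (simp only: mult_eq_0_iff of_nat_eq_0_iff) simp
  then show ?thesis using False by simp
qed

lemma fps_to_fls_sum': "fps_to_fls (sum f S) = (\<Sum>x\<in>S. fps_to_fls (f x))"
  by (induction S rule: infinite_finite_induct) auto

lemma lagrange_res:
  fixes A H :: "'a::field_char_0 fps"
  assumes A0: "A $ 0 = 0" and A1: "A $ 1 \<noteq> 0" and n: "n \<ge> 1"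
  shows "fls_residue (inverse (fps_to_fls A) ^ n * fps_to_fls (H oo A) * fps_to_fls (fps_deriv A)) = H $ (n-1)"
proof -
  define a where "a = fps_to_fls A"
  define a' where "a' = fps_to_fls (fps_deriv A)"
  have "A \<noteq> 0" using A1 by auto
  have "subdegree A = 1"
    using A0 A1 by (intro subdegreeI) auto
  then have sa: "fls_subdegree a = 1" unfolding a_def by (simp add: fls_subdegree_fls_to_fps)
  have a0: "a \<noteq> 0" using \<open>A \<noteq> 0\<close> unfolding a_def by simp
  define T where "T = (\<Sum>m<n. fps_const (H $ m) * fps_X ^ m)"
  define R where "R = H - T"
  have Tnth: "T $ i = (if i < n then H $ i else 0)" for i
  proof -
    have "T $ i = (\<Sum>m<n. if i = m then H $ m else 0)"
      unfolding T_def fps_sum_nth by (intro sum.cong) auto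
    then show ?thesis by simp
  qed
  have R: "R = fps_shift n R * fps_X ^ n"
    by (rule fps_ext) (simp add: fps_X_power_mult_right_nth R_def Tnth)
  define Q where "Q = fps_shift n R"
  have HT: "H = T + Q * fps_X ^ n" using R unfolding Q_def R_def by simp
  have TA: "T oo A = (\<Sum>m<n. fps_const (H $ m) * A ^ m)"
    unfolding T_def
    by (simp add: fps_compose_sum_distrib fps_compose_mult_distrib[OF A0]
        fps_compose_power[OF A0, symmetric] A0)
  have QA: "(Q * fps_X ^ n) oo A = (Q oo A) * A ^ n"
    by (simp add: fps_compose_mult_distrib[OF A0] fps_compose_power[OF A0, symmetric] A0)
  have "H oo A = (T oo A) + ((Q * fps_X ^ n) oo A)"
    by (subst HT) (rule fps_compose_add_distrib)
  then have "H oo A = (\<Sum>m<n. fps_const (H $ m) * A ^ m) + (Q oo A) * A ^ n"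
    by (simp only: TA QA)
  then have "fps_to_fls (H oo A) = (\<Sum>m<n. fls_const (H $ m) * a ^ m) + fps_to_fls (Q oo A) * a ^ n"
    unfolding a_def by (simp add: fls_times_fps_to_fls fps_to_fls_power fps_to_fls_sum')
  then have "inverse a ^ n * fps_to_fls (H oo A) * a' =
     (\<Sum>m<n. fls_const (H $ m) * (inverse a ^ n * a ^ m * a')) + fps_to_fls (Q oo A) * (inverse a ^ n * a ^ n) * a'"
    by (simp add: algebra_simps sum_distrib_left sum_distrib_right)
  also have "inverse a ^ n * a ^ n = 1" using a0 by (simp add: power_mult_distrib[symmetric])
  also have "(\<Sum>m<n. fls_const (H $ m) * (inverse a ^ n * a ^ m * a')) =
             (\<Sum>m<n. fls_const (H $ m) * (inverse a ^ (n - m) * a'))"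
  proof (rule sum.cong)
    fix m assume "m \<in> {..<n}"
    then have "inverse a ^ n = inverse a ^ (n - m) * inverse a ^ m"
      by (simp add: power_add[symmetric])
    then have "inverse a ^ n * a ^ m = inverse a ^ (n - m)"
      using a0 by (simp add: mult.assoc power_mult_distrib[symmetric])
    then show "fls_const (H $ m) * (inverse a ^ n * a ^ m * a') = fls_const (H $ m) * (inverse a ^ (n - m) * a')"
      by simp
  qed simp
  finally have eq: "inverse a ^ n * fps_to_fls (H oo A) * a' =
     (\<Sum>m<n. fls_const (H $ m) * (inverse a ^ (n - m) * a')) + fps_to_fls ((Q oo A) * fps_deriv A)"
    by (simp add: a'_def fls_times_fps_to_fls)
  have "fls_residue (inverse a ^ n * fps_to_fls (H oo A) * a') =
        (\<Sum>m<n. H $ m * fls_residue (inverse a ^ (n - m) * a'))"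
    unfolding eq fls_residue_def by (simp add: fls_nth_sum)
  also have "\<dots> = (\<Sum>m<n. if m = n - 1 then H $ m else 0)"
  proof (rule sum.cong)
    fix m assume m: "m \<in> {..<n}"
    have "fls_residue (inverse a ^ (n - m) * a') = (if n - m = 1 then 1 else 0)"
      unfolding a'_def fls_deriv_fps_to_fls[symmetric] a_def[symmetric]
      by (rule res_inv_pow[OF sa]) (use m in auto)
    then show "H $ m * fls_residue (inverse a ^ (n - m) * a') = (if m = n - 1 then H $ m else 0)"
      using m by auto
  qed simp
  also have "\<dots> = H $ (n - 1)" using n by simp
  finally show ?thesis unfolding a_def a'_def .
qed

lemma finite_compositions: "finite (compositions m j)"
proof (rule finite_subset)
  show "compositions m j \<subseteq> {xs. set xs \<subseteq> {0..m} \<and> length xs = j}"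
    unfolding compositions_def by (auto simp: member_le_sum_list)
  show "finite {xs. set xs \<subseteq> {0..m} \<and> length xs = j}"
    by (rule finite_lists_length_eq) simp
qed

lemma compositions_0: "compositions m 0 = (if m = 0 then {[]} else {})"
  unfolding compositions_def by auto

lemma compositions_Suc:
  "compositions m (Suc j) = (\<lambda>(l, xs). l # xs) ` (SIGMA l:{1..m}. compositions (m - l) j)"
proof (intro equalityI subsetI)
  fix xs assume xs: "xs \<in> compositions m (Suc j)"
  then obtain l ys where xs': "xs = l # ys" unfolding compositions_def by (cases xs) auto
  with xs have "l \<in> {1..m}" "ys \<in> compositions (m - l) j"
    unfolding compositions_def by auto
  then show "xs \<in> (\<lambda>(l, xs). l # xs) ` (SIGMA l:{1..m}. compositions (m - l) j)"
    using xs' by force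
next
  fix xs assume "xs \<in> (\<lambda>(l, xs). l # xs) ` (SIGMA l:{1..m}. compositions (m - l) j)"
  then show "xs \<in> compositions m (Suc j)"
    unfolding compositions_def by auto
qed

lemma composita_eq:
  fixes F :: "'a::comm_semiring_1 fps"
  assumes F0: "F $ 0 = 0"
  shows "composita F m j = (F ^ j) $ m"
proof (induction j arbitrary: m)
  case 0
  then show ?case by (simp add: composita_def compositions_0)
next
  case (Suc j)
  have inj: "inj_on (\<lambda>(l, xs). l # xs) (SIGMA l:{1..m}. compositions (m - l) j)"
    by (auto simp: inj_on_def)
  have "composita F m (Suc j) =
      (\<Sum>p\<in>(SIGMA l:{1..m}. compositions (m - l) j). (\<lambda>xs. \<Prod>i<length xs. F $ (xs ! i)) ((\<lambda>(l, xs). l # xs) p))"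
    unfolding composita_def compositions_Suc by (rule sum.reindex[OF inj, unfolded comp_def])
  also have "\<dots> = (\<Sum>l=1..m. \<Sum>xs\<in>compositions (m - l) j. F $ l * (\<Prod>i<length xs. F $ (xs ! i)))"
    by (subst sum.Sigma) (auto simp: finite_compositions prod.lessThan_Suc_shift simp del: prod.lessThan_Suc intro!: sum.cong)
  also have "\<dots> = (\<Sum>l=1..m. F $ l * composita F (m - l) j)"
    by (simp add: composita_def sum_distrib_left)
  also have "\<dots> = (\<Sum>l=1..m. F $ l * (F ^ j) $ (m - l))"
    by (simp add: Suc.IH)
  also have "\<dots> = (\<Sum>l=0..m. F $ l * (F ^ j) $ (m - l))"
    by (simp add: sum.atLeast_Suc_atMost F0)
  also have "\<dots> = (F ^ Suc j) $ m"
    by (simp add: fps_mult_nth)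
  finally show ?case .
qed

lemma pow_minus_one_nth:
  fixes f :: "'a::comm_ring_1 fps"
  shows "((f - 1) ^ k) $ i = (\<Sum>j\<le>k. of_nat (k choose j) * (-1) ^ (k - j) * (f ^ j) $ i)"
proof -
  have "(f - 1) ^ k = (f + fps_const (-1)) ^ k" by (simp add: fps_const_neg[symmetric])
  also have "\<dots> = (\<Sum>j\<le>k. fps_const (of_nat (k choose j)) * f ^ j * fps_const ((-1) ^ (k - j)))"
    by (simp add: binomial_ring fps_of_nat)
  finally show ?thesis
    by (simp add: fps_sum_nth mult_ac del: fps_const_neg)
qed

lemma neg_gchoose:
  assumes "n \<ge> 1"
  shows "((- of_nat n :: 'a::field_char_0) gchoose k) = (-1) ^ k * of_nat ((n + k - 1) choose k)"
proof -
  have "(of_nat n + of_nat k - 1 :: 'a) = of_nat (n + k - 1)" using assms by (simp add: of_nat_diff)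
  then show ?thesis by (simp add: gbinomial_minus binomial_gbinomial)
qed

theorem corollary4:
  fixes F A :: "'a::field_char_0 fps"
  assumes "fps_nth F 0 = 0" and "fps_nth F 1 = 1"
    and "fps_nth A 0 = 0" and "fps_compose F A = fps_X"
  shows "fps_nth A 1 = 1 \<and>
    (\<forall>n::nat. n > 1 \<longrightarrow>
      fps_nth A n = (1 / of_nat n) * (\<Sum>k=1..n-1. of_nat ((n + k - 1) choose (n - 1)) *
         (\<Sum>j=1..k. (-1) ^ j * of_nat (k choose j) * composita F (n + j - 1) j)))"
proof -
  note F0 = assms(1) and F1 = assms(2) and A0 = assms(3) and FA = assms(4)
  have "(F oo A) $ 1 = A $ 1"
    using F1 by (simp add: fps_compose_nth F0)
  then have A1: "A $ 1 = 1" using FA by simp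
  define Fs where "Fs = fps_shift 1 F"
  define B where "B = fps_shift 1 A"
  have FFs: "F = Fs * fps_X"
    by (rule fps_ext) (auto simp: Fs_def F0)
  have AB: "A = B * fps_X"
    by (rule fps_ext) (auto simp: B_def A0)
  have Fs0: "Fs $ 0 = 1" using F1 by (simp add: Fs_def)
  have B0: "B $ 0 = 1" using A1 by (simp add: B_def)
  have "fps_X = (Fs oo A) * A"
    using FA FFs by (simp add: fps_compose_mult_distrib[OF A0] A0)
  then have "1 * fps_X = ((Fs oo A) * B) * fps_X"
    using AB by (simp add: mult.assoc)
  then have FsAB: "(Fs oo A) * B = 1"
    by (subst (asm) mult_right_cancel) simp_all
  have invFsA: "inverse (Fs oo A) = B" by (rule fps_inverse_unique[OF FsAB])
  show ?thesis
  proof (intro conjI allI impI A1)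
    fix n :: nat assume n1: "n > 1"
    define H where "H = inverse Fs ^ n"
    have HA: "H oo A = B ^ n"
      unfolding H_def
      by (simp add: fps_compose_power[OF A0, symmetric] fps_inverse_compose[OF A0] Fs0 invFsA)
    have key: "of_nat n * A $ n = H $ (n - 1)"
    proof -
      define b where "b = fps_to_fls B"
      have "B \<noteq> 0" using B0 by auto
      then have b0: "b \<noteq> 0" unfolding b_def by simp
      have "inverse (fps_to_fls A) ^ n * fps_to_fls (B ^ n) = fls_X_inv ^ n * (inverse b ^ n * b ^ n)"
        unfolding AB b_def by (simp add: fls_times_fps_to_fls fps_to_fls_power fls_inverse_X power_mult_distrib mult_ac)
      also have "inverse b ^ n * b ^ n = 1" using b0 by (simp add: power_mult_distrib[symmetric])
      finally have e: "inverse (fps_to_fls A) ^ n * fps_to_fls (B ^ n) = fls_X_inv ^ n" by simp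
      have "H $ (n - 1) = fls_residue (fls_X_inv ^ n * fps_to_fls (fps_deriv A))"
        using lagrange_res[OF A0, of n H] A1 n1 by (simp add: HA e)
      also have "\<dots> = fps_deriv A $ (n - 1)"
      proof -
        have "nat (int n - 1) = n - 1" using n1 by simp
        then show ?thesis using n1 by (simp add: fls_X_inv_power_times_conv_shift)
      qed
      also have "\<dots> = of_nat n * A $ n" using n1 by simp
      finally show ?thesis by simp
    qed
    show "A $ n = (1 / of_nat n) * (\<Sum>k=1..n-1. of_nat ((n + k - 1) choose (n - 1)) *
         (\<Sum>j=1..k. (-1) ^ j * of_nat (k choose j) * composita F (n + j - 1) j))"
    proof -
      define G where "G = Fs - 1"
      have G0: "G $ 0 = 0" using Fs0 by (simp add: G_def)
      have "(1 + fps_X) oo G = Fs"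
        by (simp only: fps_compose_add_distrib fps_compose_1 fps_X_fps_compose_startby0[OF G0]) (simp add: G_def)
      then have "Fs ^ n = ((1 + fps_X) ^ n) oo G"
        by (metis fps_compose_power[OF G0])
      then have "H = inverse (((1 + fps_X) ^ n) oo G)"
        by (simp add: H_def fps_inverse_power[symmetric])
      also have "\<dots> = inverse ((1 + fps_X) ^ n) oo G"
        by (rule fps_inverse_compose[OF G0, symmetric]) simp
      also have "\<dots> = fps_binomial (- of_nat n) oo G"
        by (simp add: fps_binomial_minus_of_nat)
      finally have HG: "H = fps_binomial (- of_nat n) oo G" .
      define Y where "Y = (\<lambda>k. of_nat ((n + k - 1) choose (n - 1)) *
         (\<Sum>j=1..k. (-1) ^ j * of_nat (k choose j) * composita F (n + j - 1) j) :: 'a)"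
      define T where "T = (\<lambda>k. ((- of_nat n :: 'a) gchoose k) * (G ^ k) $ (n - 1))"
      have FsF: "(Fs ^ j) $ (n - 1) = composita F (n - 1 + j) j" for j
      proof -
        have "composita F (n - 1 + j) j = (Fs ^ j * fps_X ^ j) $ (n - 1 + j)"
          unfolding composita_eq[OF F0] by (subst FFs) (simp only: power_mult_distrib)
        also have "\<dots> = (Fs ^ j) $ (n - 1)" by (simp add: fps_X_power_mult_right_nth)
        finally show ?thesis by simp
      qed
      have Tk: "T k = (-1) ^ k * of_nat ((n + k - 1) choose k) *
         (\<Sum>j\<le>k. of_nat (k choose j) * (-1) ^ (k - j) * composita F (n - 1 + j) j)" for k
      proof -
        have "n \<ge> 1" using n1 by simp
        then show ?thesis
          unfolding T_def G_def by (simp only: neg_gchoose pow_minus_one_nth FsF)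
      qed
      have inner: "(\<Sum>j\<le>k. of_nat (k choose j) * (-1) ^ (k - j) * composita F (n - 1 + j) j) =
          (\<Sum>j=1..k. of_nat (k choose j) * (-1) ^ (k - j) * composita F (n - 1 + j) j)" for k
      proof -
        have c0: "composita F (n - Suc 0) 0 = 0" unfolding composita_eq[OF F0] using n1 by simp
        show ?thesis unfolding atMost_atLeast0 by (simp add: sum.atLeast_Suc_atMost c0)
      qed
      have T0: "T 0 = 0" using Tk[of 0] inner[of 0] by simp
      have TY: "T k = Y k" if k: "k \<ge> 1" for k
      proof -
        have ch: "(n + k - 1) choose k = (n + k - 1) choose (n - 1)"
          using binomial_symmetric[of k "n + k - 1"] n1 by simp
        have "T k = of_nat ((n + k - 1) choose (n - 1)) *
           (\<Sum>j=1..k. (-1) ^ k * (of_nat (k choose j) * (-1) ^ (k - j) * composita F (n - 1 + j) j))"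
        proof -
          have "T k = (-1) ^ k * of_nat ((n + k - 1) choose (n - 1)) *
             (\<Sum>j=1..k. of_nat (k choose j) * (-1) ^ (k - j) * composita F (n - 1 + j) j)"
            by (simp only: Tk inner ch)
          then show ?thesis by (simp only: sum_distrib_left mult_ac)
        qed
        also have "\<dots> = Y k"
          unfolding Y_def
        proof (intro arg_cong[where f="\<lambda>x. _ * x"] sum.cong refl)
          fix j assume j: "j \<in> {1..k}"
          have "(-1 :: 'a) ^ k = (-1) ^ (k - j) * (-1) ^ j"
            using j by (simp add: power_add[symmetric])
          then have "(-1 :: 'a) ^ k * (-1) ^ (k - j) = (-1) ^ j * ((-1) ^ (k - j) * (-1) ^ (k - j))"
            by (simp add: mult_ac)
          also have "(-1 :: 'a) ^ (k - j) * (-1) ^ (k - j) = 1"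
            by (simp add: power_add[symmetric] flip: mult_2)
          finally have s: "(-1 :: 'a) ^ k * (-1) ^ (k - j) = (-1) ^ j" by simp
          have nj: "n - 1 + j = n + j - 1" using n1 by simp
          show "(-1) ^ k * (of_nat (k choose j) * (-1) ^ (k - j) * composita F (n - 1 + j) j) =
              (-1) ^ j * of_nat (k choose j) * composita F (n + j - 1) j"
            by (simp only: nj flip: s) (simp add: mult_ac)
        qed
        finally show ?thesis .
      qed
      have "of_nat n * A $ n = (\<Sum>k=0..n-1. T k)"
        unfolding key HG T_def by (simp add: fps_compose_nth)
      also have "\<dots> = (\<Sum>k=1..n-1. T k)"
        by (simp add: sum.atLeast_Suc_atMost T0)
      also have "\<dots> = (\<Sum>k=1..n-1. Y k)"
        by (rule sum.cong) (auto intro: TY)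
      finally have "of_nat n * A $ n = (\<Sum>k=1..n-1. Y k)" .
      then show ?thesis
        using n1 by (simp add: Y_def field_simps)
    qed
  qed
qed

end
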